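(* Let $v>0$ and let $(a,r,s):\mathbb{R}\to\mathbb{R}^3$ be a solution of $$\partial_\xi a=r,\qquad \partial_\xi r=-vr-\frac{sa}{2}+\frac{a|r|}{2},\qquad \partial_\xi s=-vs-ra$$ such that $(a,r,s)(\xi)\to(a_0,0,0)$ as $\xi\to-\infty$ for some $a_0\in\mathbb{R}$, and $(a,r,s)\not\equiv(a_0,0,0)$. Then $|a_0|\ge\frac45 v$. In particular, there exists $\xi_0\in\mathbb{R}$ such that $a(\xi)$ is nonzero and of constant sign for all $\xi<\xi_0$. *)

theory Defs
  imports "HOL-Analysis.Analysis"
begin

end

theory Submission
  imports Defs
begin

lemma quad_neg:
  fixes v x y A :: real
  assumes "v > 0" "x \<ge> 0" "y \<ge> 0" "0 \<le> A" "A \<le> 9/10 * v"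
  shows "- 2* v *x^2 + A*x^2 + 2*A*x*y - v *y^2 \<le> 0"
proof -
  have "A*x^2 \<le> 9/10* v *x^2" using assms by (intro mult_right_mono) auto
  moreover have "2*A*x*y \<le> 2*(9/10* v)*x*y" using assms
    by (intro mult_right_mono) auto
  moreover have "- 2* v *x^2 + 9/10* v *x^2 + 2*(9/10* v)*x*y - v *y^2
     = - v *((x - 9/10*y)^2 + 1/10*x^2 + 19/100*y^2)"
    by (simp add: power2_eq_square algebra_simps)
  moreover have "- v *((x - 9/10*y)^2 + 1/10*x^2 + 19/100*y^2) \<le> 0"
    using assms by (intro mult_nonpos_nonneg) auto
  ultimately show ?thesis by linarith
qed

lemma dLn_aux:
  fixes v R S A :: real
  assumes "v > 0" "\<bar>A\<bar> \<le> 9/10 * v"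
  shows "2 * R * (- v * R - S * A / 2 + A * \<bar>R\<bar> / 2) + S * (- v * S - R * A) \<le> 0"
proof -
  have e: "2 * R * (- v * R - S * A / 2 + A * \<bar>R\<bar> / 2) + S * (- v * S - R * A)
     = - 2 * v * R^2 + A * R * \<bar>R\<bar> - 2 * (A * R * S) - v * S^2"
    by (simp add: power2_eq_square algebra_simps)
  have "A * R * \<bar>R\<bar> \<le> \<bar>A * R * \<bar>R\<bar>\<bar>" by (rule abs_ge_self)
  also have "\<dots> = \<bar>A\<bar> * \<bar>R\<bar>^2" by (simp add: abs_mult power2_eq_square)
  finally have b1: "A * R * \<bar>R\<bar> \<le> \<bar>A\<bar> * R^2" by simp
  have "- (A * R * S) \<le> \<bar>A * R * S\<bar>" by (rule abs_ge_minus_self)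
  also have "\<dots> = \<bar>A\<bar> * \<bar>R\<bar> * \<bar>S\<bar>" by (simp add: abs_mult)
  finally have b2: "- (A * R * S) \<le> \<bar>A\<bar> * \<bar>R\<bar> * \<bar>S\<bar>" .
  have q: "- 2 * v * R^2 + \<bar>A\<bar> * R^2 + 2 * (\<bar>A\<bar> * \<bar>R\<bar> * \<bar>S\<bar>) - v * S^2 \<le> 0"
    using quad_neg[OF assms(1) abs_ge_zero abs_ge_zero abs_ge_zero assms(2), of R S] by (simp add: mult.assoc)
  show ?thesis unfolding e using b1 b2 q by linarith
qed
lemma E_aux:
  fixes v M R S A P :: real
  assumes "v > 0" "M \<ge> 0" "\<bar>A\<bar> \<le> M"
  shows "2 * P * R + 2 * R * (- v * R - S * A / 2 + A * \<bar>R\<bar> / 2) + 2 * S * (- v * S - R * A)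
     \<le> (1 + 3 * M) * (P^2 + R^2 + S^2)"
proof -
  have e: "2 * P * R + 2 * R * (- v * R - S * A / 2 + A * \<bar>R\<bar> / 2) + 2 * S * (- v * S - R * A)
     = 2 * P * R - 2 * (v * R^2) + A * R * \<bar>R\<bar> - 3 * (A * R * S) - 2 * (v * S^2)"
    by (simp add: power2_eq_square algebra_simps)
  have "A * R * \<bar>R\<bar> \<le> \<bar>A * R * \<bar>R\<bar>\<bar>" by (rule abs_ge_self)
  also have "\<dots> = \<bar>A\<bar> * \<bar>R\<bar>^2" by (simp add: abs_mult power2_eq_square)
  finally have b1: "A * R * \<bar>R\<bar> \<le> \<bar>A\<bar> * R^2" by simp
  have "- (A * R * S) \<le> \<bar>A * R * S\<bar>" by (rule abs_ge_minus_self)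
  also have "\<dots> = \<bar>A\<bar> * (\<bar>R\<bar> * \<bar>S\<bar>)" by (simp add: abs_mult)
  finally have b2: "- (A * R * S) \<le> \<bar>A\<bar> * (\<bar>R\<bar> * \<bar>S\<bar>)" .
  have h1: "2 * P * R \<le> P^2 + R^2" using sum_squares_bound[of P R] .
  have "2 * \<bar>R\<bar> * \<bar>S\<bar> \<le> \<bar>R\<bar>^2 + \<bar>S\<bar>^2" using sum_squares_bound[of "\<bar>R\<bar>" "\<bar>S\<bar>"] .
  hence rs: "\<bar>R\<bar> * \<bar>S\<bar> \<le> (R^2 + S^2)/2" by simp
  have "\<bar>A\<bar> * (\<bar>R\<bar> * \<bar>S\<bar>) \<le> M * (\<bar>R\<bar> * \<bar>S\<bar>)" using assms by (intro mult_right_mono) auto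
  also have "\<dots> \<le> M * ((R^2 + S^2)/2)" using assms rs by (intro mult_left_mono) auto
  finally have h2: "\<bar>A\<bar> * (\<bar>R\<bar> * \<bar>S\<bar>) \<le> M * R^2 / 2 + M * S^2 / 2" by (simp add: algebra_simps)
  have h3: "\<bar>A\<bar> * R^2 \<le> M * R^2" using assms by (intro mult_right_mono) auto
  have h4: "0 \<le> v * R^2" "0 \<le> v * S^2" "0 \<le> M*R^2" "0 \<le> M*S^2" "0 \<le> M*P^2" "0 \<le> S^2" "0 \<le> P^2"
    using assms by simp_all
  have r: "(1 + 3*M) * (P^2 + R^2 + S^2) = P^2 + R^2 + S^2 + 3*(M*P^2) + 3*(M*R^2) + 3*(M*S^2)"
    by (simp add: algebra_simps)
  show ?thesis unfolding e r using b1 b2 h1 h2 h3 h4 by linarith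
qed

theorem lemma2:
  fixes v a0 :: real and a r s :: "real \<Rightarrow> real"
  assumes v_pos: "v > 0"
    and da: "\<And>\<xi>. (a has_real_derivative r \<xi>) (at \<xi>)"
    and dr: "\<And>\<xi>. (r has_real_derivative (- v * r \<xi> - s \<xi> * a \<xi> / 2 + a \<xi> * \<bar>r \<xi>\<bar> / 2)) (at \<xi>)"
    and ds: "\<And>\<xi>. (s has_real_derivative (- v * s \<xi> - r \<xi> * a \<xi>)) (at \<xi>)"
    and lim_a: "(a \<longlongrightarrow> a0) at_bot"
    and lim_r: "(r \<longlongrightarrow> 0) at_bot"
    and lim_s: "(s \<longlongrightarrow> 0) at_bot"
    and nontriv: "\<exists>\<xi>. (a \<xi>, r \<xi>, s \<xi>) \<noteq> (a0, 0, 0)"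
  shows "\<bar>a0\<bar> \<ge> 4 / 5 * v \<and>
         (\<exists>\<xi>0. (\<forall>\<xi><\<xi>0. a \<xi> > 0) \<or> (\<forall>\<xi><\<xi>0. a \<xi> < 0))"
proof -
  have main: "\<bar>a0\<bar> \<ge> 4 / 5 * v"
  proof (rule ccontr)
    assume "\<not> \<bar>a0\<bar> \<ge> 4 / 5 * v"
    hence a0s: "\<bar>a0\<bar> < 4/5 * v" by simp
    have "v/10 > 0" using v_pos by simp
    have "eventually (\<lambda>x. dist (a x) a0 < v/10) at_bot"
      using tendsto_iff[THEN iffD1, OF lim_a, rule_format, OF \<open>v/10 > 0\<close>] .
    then obtain T where T: "\<And>x. x \<le> T \<Longrightarrow> dist (a x) a0 < v/10"
      by (auto simp: eventually_at_bot_linorder)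
    have aT: "\<bar>a x\<bar> \<le> 9/10 * v" if "x \<le> T" for x
      using T[OF that] a0s abs_triangle_ineq2[of "a x" a0] by (auto simp: dist_real_def)
    define L where "L = (\<lambda>x. r x ^ 2 + s x ^ 2 / 2)"
    have dL: "(L has_real_derivative
        (2 * r x * (- v * r x - s x * a x / 2 + a x * \<bar>r x\<bar> / 2) + s x * (- v * s x - r x * a x))) (at x)" for x
      unfolding L_def by (auto intro!: derivative_eq_intros dr ds)
    have dLn: "2 * r x * (- v * r x - s x * a x / 2 + a x * \<bar>r x\<bar> / 2) + s x * (- v * s x - r x * a x) \<le> 0"
      if "x \<le> T" for x
      using dLn_aux[OF v_pos aT[OF that]] .
    have Lmono: "L y \<le> L x" if "x \<le> y" "y \<le> T" for x y
    proof (rule DERIV_nonpos_imp_nonincreasing[OF that(1)])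
      fix z assume "x \<le> z" "z \<le> y"
      hence "z \<le> T" using that by linarith
      thus "\<exists>d. DERIV L z :> d \<and> d \<le> 0" using dL dLn by blast
    qed
    have Llim: "(L \<longlongrightarrow> 0) at_bot"
      unfolding L_def using lim_r lim_s by (auto intro!: tendsto_eq_intros)
    have L0: "L y = 0" if "y \<le> T" for y
    proof -
      have "L y \<le> 0"
      proof (rule tendsto_le[OF _ Llim tendsto_const])
        show "eventually (\<lambda>x. L y \<le> L x) at_bot"
          unfolding eventually_at_bot_linorder using Lmono that by auto
      qed simp
      moreover have "L y \<ge> 0" unfolding L_def by simp
      ultimately show ?thesis by simp
    qed
    have rs0: "r y = 0 \<and> s y = 0" if "y \<le> T" for y
    proof -
      have "r y ^ 2 \<le> 0" "s y ^ 2 \<le> 0"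
        using L0[OF that] zero_le_power2[of "r y"] zero_le_power2[of "s y"] unfolding L_def by linarith+
      thus ?thesis by simp
    qed
    have aconst: "a y = a T" if "y \<le> T" for y
    proof -
      have "a T \<le> a y"
        by (rule DERIV_nonpos_imp_nonincreasing[OF that]) (use da rs0 in fastforce)
      moreover have "a y \<le> a T"
        by (rule DERIV_nonneg_imp_nondecreasing[OF that]) (use da rs0 in fastforce)
      ultimately show ?thesis by simp
    qed
    have "(a \<longlongrightarrow> a T) at_bot"
      by (rule tendsto_eventually) (auto simp: eventually_at_bot_linorder intro: aconst)
    hence aTa0: "a T = a0" using lim_a tendsto_unique by force
    obtain xn where xn: "(a xn, r xn, s xn) \<noteq> (a0, 0, 0)" using nontriv by blast
    show False
    proof (cases "xn \<le> T")
      case True thus ?thesis using xn rs0 aconst aTa0 by auto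
    next
      case False
      have "continuous_on {T..xn} a"
        using da by (meson DERIV_isCont continuous_at_imp_continuous_on)
      then obtain M where M: "M \<ge> 0" "\<And>x. x \<in> {T..xn} \<Longrightarrow> norm (a x) \<le> M"
        using continuous_on_compact_bound[of "{T..xn}" a] by auto
      define C where "C = 1 + 3 * M"
      define E where "E = (\<lambda>x. (a x - a0)^2 + r x ^ 2 + s x ^ 2)"
      define G where "G = (\<lambda>x. E x * exp (- C * x))"
      define E' where "E' = (\<lambda>x. 2 * (a x - a0) * r x + 2 * r x * (- v * r x - s x * a x / 2 + a x * \<bar>r x\<bar> / 2) + 2 * s x * (- v * s x - r x * a x))"
      have dE: "(E has_real_derivative E' x) (at x)" for x
        unfolding E_def E'_def by (auto intro!: derivative_eq_intros dr ds da)
      have dG: "(G has_real_derivative (E' x - C * E x) * exp (- C * x)) (at x)" for x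
        unfolding G_def by (auto intro!: derivative_eq_intros dE simp: algebra_simps)
      have E'le: "E' x \<le> C * E x" if "x \<in> {T..xn}" for x
      proof -
        have "\<bar>a x\<bar> \<le> M" using M(2)[OF that] by simp
        from E_aux[OF v_pos M(1) this, where P="a x - a0" and R="r x" and S="s x"]
        show ?thesis unfolding E'_def C_def E_def .
      qed
      have "G xn \<le> G T"
      proof (rule DERIV_nonpos_imp_nonincreasing[of T xn G])
        show "T \<le> xn" using False by simp
        fix z assume "T \<le> z" "z \<le> xn"
        hence "E' z - C * E z \<le> 0" using E'le by simp
        hence "(E' z - C * E z) * exp (- C * z) \<le> 0" by (simp add: mult_nonpos_nonneg)
        thus "\<exists>d. DERIV G z :> d \<and> d \<le> 0" using dG by blast
      qed
      moreover have "G T = 0" unfolding G_def E_def using rs0[of T] aTa0 by simp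
      ultimately have "E xn \<le> 0" unfolding G_def
        by (smt (verit) exp_gt_zero mult_pos_pos)
      moreover have "E xn \<ge> 0" unfolding E_def by simp
      ultimately have "E xn = 0" by simp
      hence "a xn = a0 \<and> r xn = 0 \<and> s xn = 0" unfolding E_def
        using zero_le_power2[of "a xn - a0"] zero_le_power2[of "r xn"] zero_le_power2[of "s xn"]
        by (smt (verit) power_eq_0_iff)
      thus False using xn by simp
    qed
  qed
  have "\<exists>\<xi>0. (\<forall>\<xi><\<xi>0. a \<xi> > 0) \<or> (\<forall>\<xi><\<xi>0. a \<xi> < 0)"
  proof (cases "a0 > 0")
    case True
    have "eventually (\<lambda>x. 0 < a x) at_bot" using order_tendstoD(1)[OF lim_a True] .
    then obtain N where "\<And>x. x \<le> N \<Longrightarrow> 0 < a x" by (auto simp: eventually_at_bot_linorder)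
    thus ?thesis by (meson less_imp_le)
  next
    case False
    hence "a0 < 0" using main v_pos by auto
    have "eventually (\<lambda>x. a x < 0) at_bot" using order_tendstoD(2)[OF lim_a \<open>a0 < 0\<close>] .
    then obtain N where "\<And>x. x \<le> N \<Longrightarrow> a x < 0" by (auto simp: eventually_at_bot_linorder)
    thus ?thesis by (meson less_imp_le)
  qed
  with main show ?thesis by blast
qed

end
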